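(* The wall $W$ has a $4$-track layout such that for all distinct edges $pq$ and $pr$, the vertices $q$ and $r$ are in distinct tracks.
   Context: The wall is the infinite graph $W$ with vertex set $\mathbb{Z}^2$ and edge set $\{(x,y)(x+1,y): x,y\in\mathbb{Z}\}\cup\{(x,y)(x,y+1): x,y\in\mathbb{Z},\ x+y\text{ even}\}$. A track in a graph is an independent set equipped with a total order $\preceq$. A $k$-track layout is a partition $(V_1,\dots,V_k)$ of the vertex set into tracks such that there are no edges $vw$ and $xy$ with $v\prec x$ in some track $V_i$ and $y\prec w$ in some track $V_j$. *)

theory Defs
  imports Main
begin

type_synonym vertex = "int \<times> int"

definition wall_edge :: "vertex \<Rightarrow> vertex \<Rightarrow> bool" where
  "wall_edge u v \<longleftrightarrow>
     (fst v = fst u + 1 \<and> snd v = snd u) \<or>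
     (fst v = fst u \<and> snd v = snd u + 1 \<and> even (fst u + snd u))"

definition wall_adj :: "vertex \<Rightarrow> vertex \<Rightarrow> bool" where
  "wall_adj u v \<longleftrightarrow> wall_edge u v \<or> wall_edge v u"

definition track_layout ::
  "('a \<Rightarrow> 'a \<Rightarrow> bool) \<Rightarrow> nat \<Rightarrow> ('a \<Rightarrow> nat) \<Rightarrow> ('a \<Rightarrow> 'a \<Rightarrow> bool) \<Rightarrow> bool" where
  "track_layout E k trk prec \<longleftrightarrow>
     (\<forall>v. trk v < k) \<and>
     (\<forall>v w. E v w \<longrightarrow> trk v \<noteq> trk w) \<and>
     (\<forall>v w. prec v w \<longrightarrow> trk v = trk w) \<and>
     (\<forall>v. \<not> prec v v) \<and>
     (\<forall>u v w. prec u v \<longrightarrow> prec v w \<longrightarrow> prec u w) \<and>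
     (\<forall>v w. trk v = trk w \<longrightarrow> v \<noteq> w \<longrightarrow> prec v w \<or> prec w v) \<and>
     (\<forall>v w x y. E v w \<longrightarrow> E x y \<longrightarrow> \<not> (prec v x \<and> prec y w))"

end

theory Submission imports Defs begin
lemma adj_iff: "wall_adj (a,b) (c,d) \<longleftrightarrow> (c=a+1 \<and> d=b) \<or> (c=a-1 \<and> d=b) \<or>
   (c=a \<and> d=b+1 \<and> even(a+b)) \<or> (c=a \<and> d=b-1 \<and> even(a+d))"
  unfolding wall_adj_def wall_edge_def by auto
lemma cls0: "wall_adj (a,b) (c,d) \<Longrightarrow> (c+2*d) mod 4 = (a+2*b+1) mod 4 \<or> (c+2*d) mod 4 = (a+2*b+2) mod 4 \<or> (c+2*d) mod 4 = (a+2*b+3) mod 4"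
  unfolding adj_iff mod_eq_dvd_iff by (elim disjE conjE; hypsubst_thin; simp add: algebra_simps)
lemma c1: "wall_adj (a,b) (c,d) \<Longrightarrow> (c+2*d) mod 4 = (a+2*b+1) mod 4 \<Longrightarrow> c = a+1 \<and> d = b"
  unfolding adj_iff mod_eq_dvd_iff by (elim disjE conjE; hypsubst_thin; simp add: algebra_simps)
lemma c3: "wall_adj (a,b) (c,d) \<Longrightarrow> (c+2*d) mod 4 = (a+2*b+3) mod 4 \<Longrightarrow> c = a-1 \<and> d = b"
  unfolding adj_iff mod_eq_dvd_iff by (elim disjE conjE; hypsubst_thin; simp add: algebra_simps)
lemma c2: "wall_adj (a,b) (c,d) \<Longrightarrow> (c+2*d) mod 4 = (a+2*b+2) mod 4 \<Longrightarrow>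
   c = a \<and> (if even (a+b) then d = b+1 else d = b - 1)"
  unfolding adj_iff mod_eq_dvd_iff by (elim disjE conjE; hypsubst_thin; simp add: algebra_simps)
lemma cls: "wall_adj (a,b) (c,d) \<Longrightarrow> \<exists>k\<in>{1,2,3::int}. (c+2*d) mod 4 = (a+2*b+k) mod 4"
  using cls0[of a b c d] by blast

lemma proper: "wall_adj (a,b) (c,d) \<Longrightarrow> (a + 2*b) mod 4 \<noteq> (c + 2*d) mod 4"
  unfolding adj_iff mod_eq_dvd_iff by (elim disjE conjE; hypsubst_thin; simp add: algebra_simps)

lemma uniq: "wall_adj (a,b) (c,d) \<Longrightarrow> wall_adj (a,b) (e,f) \<Longrightarrow> (c + 2*d) mod 4 = (e + 2*f) mod 4
  \<Longrightarrow> c = e \<and> d = f"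
  unfolding adj_iff mod_eq_dvd_iff by (elim disjE conjE; hypsubst_thin; simp add: algebra_simps)

lemma nocross: "wall_adj (a,b) (c,d) \<Longrightarrow> wall_adj (e,f) (g,h) \<Longrightarrow>
  (a + 2*b) mod 4 = (e + 2*f) mod 4 \<Longrightarrow> (c + 2*d) mod 4 = (g + 2*h) mod 4 \<Longrightarrow>
  (a < e \<or> a = e \<and> b < f) \<Longrightarrow> (g < c \<or> g = c \<and> h < d) \<Longrightarrow> False"
proof -
  assume A: "wall_adj (a,b) (c,d)" "wall_adj (e,f) (g,h)"
    "(a + 2*b) mod 4 = (e + 2*f) mod 4" "(c + 2*d) mod 4 = (g + 2*h) mod 4"
    "(a < e \<or> a = e \<and> b < f)" "(g < c \<or> g = c \<and> h < d)"
  from cls[OF A(1)] obtain k where k: "k\<in>{1,2,3}" "(c+2*d) mod 4 = (a+2*b+k) mod 4" by blast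
  have "(a+2*b+k) mod 4 = (e+2*f+k) mod 4" using A(3) by (metis mod_add_left_eq)
  hence k2: "(g+2*h) mod 4 = (e+2*f+k) mod 4" using k A(4) by simp
  from k(1) show False
  proof (elim insertE emptyE)
    assume "k = 1" thus False using c1[OF A(1)] c1[OF A(2)] k k2 A(5,6) by auto
  next
    assume "k = 3" thus False using c3[OF A(1)] c3[OF A(2)] k k2 A(5,6) by auto
  next
    assume k1: "k = 2"
    have X: "c = a" "g = e" using c2[OF A(1)] c2[OF A(2)] k k2 k1 by auto
    hence ae: "a = e" "b < f" using A(5,6) by auto
    have "4 dvd (a + 2*b) - (e + 2*f)" using A(3) by (simp add: mod_eq_dvd_iff)
    hence "even (a+b) = even (e+f)" using ae by presburger
    thus False using c2[OF A(1)] c2[OF A(2)] k k2 k1 A(5,6) ae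
      by (auto split: if_splits)
  qed
qed

definition T :: "vertex \<Rightarrow> nat" where "T p = nat ((fst p + 2 * snd p) mod 4)"
definition P :: "vertex \<Rightarrow> vertex \<Rightarrow> bool" where
  "P u v \<longleftrightarrow> T u = T v \<and> (fst u < fst v \<or> fst u = fst v \<and> snd u < snd v)"

lemma T_eq: "T (a,b) = T (c,d) \<longleftrightarrow> (a + 2*b) mod 4 = (c + 2*d) mod 4"
  unfolding T_def by (simp add: nat_eq_iff)

theorem lemma13:
  shows "\<exists>trk prec. track_layout wall_adj 4 trk prec \<and>
           (\<forall>p q r. wall_adj p q \<longrightarrow> wall_adj p r \<longrightarrow> q \<noteq> r \<longrightarrow> trk q \<noteq> trk r)"
proof (intro exI conjI)
  show "track_layout wall_adj 4 T P"
    unfolding track_layout_def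
  proof (intro conjI allI impI)
    fix v show "T v < 4" unfolding T_def by simp
  next
    fix v w :: vertex assume "wall_adj v w" thus "T v \<noteq> T w"
      using proper[of "fst v" "snd v" "fst w" "snd w"] T_eq[of "fst v" "snd v" "fst w" "snd w"] by simp
  next
    fix v w assume "P v w" thus "T v = T w" unfolding P_def by simp
  next
    fix v show "\<not> P v v" unfolding P_def by simp
  next
    fix u v w assume "P u v" "P v w" thus "P u w" unfolding P_def by auto
  next
    fix v w :: vertex assume "T v = T w" "v \<noteq> w" thus "P v w \<or> P w v"
      unfolding P_def by (cases v, cases w) auto
  next
    fix v w x y :: vertex assume E: "wall_adj v w" "wall_adj x y"
    show "\<not> (P v x \<and> P y w)"
    proof
      assume "P v x \<and> P y w"
      thus False using nocross[of "fst v" "snd v" "fst w" "snd w" "fst x" "snd x" "fst y" "snd y"] E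
        T_eq[of "fst v" "snd v" "fst x" "snd x"] T_eq[of "fst w" "snd w" "fst y" "snd y"]
        unfolding P_def by auto
    qed
  qed
  show "\<forall>p q r. wall_adj p q \<longrightarrow> wall_adj p r \<longrightarrow> q \<noteq> r \<longrightarrow> T q \<noteq> T r"
  proof (intro allI impI)
    fix p q r :: vertex assume "wall_adj p q" "wall_adj p r" "q \<noteq> r"
    thus "T q \<noteq> T r"
      using uniq[of "fst p" "snd p" "fst q" "snd q" "fst r" "snd r"]
        T_eq[of "fst q" "snd q" "fst r" "snd r"] by (auto simp: prod_eq_iff)
  qed
qed

end
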